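(* Let $F$ be a dill map on $A^{\mathbb N}$ with diameter $\delta$ and local rule $f$. The following are equivalent: (1) $F$ induces a well-defined map on the Besicovitch space, i.e. for all $x,y\in A^{\mathbb N}$, $\mathfrak d_H(x,y)=0$ implies $\mathfrak d_H(F(x),F(y))=0$; (2) $F$ is $\frac{\delta D_{\max}}{\lfloor f\rfloor}$-Lipschitz with respect to $\mathfrak d_H$, i.e. $\mathfrak d_H(F(x),F(y))\le \frac{\delta D_{\max}}{\lfloor f\rfloor}\,\mathfrak d_H(x,y)$ for all $x,y\in A^{\mathbb N}$; (3) $F$ is either a constant map or uniform.
   Context: $A$ is a finite alphabet, $A^{\mathbb N}$ the infinite sequences over $A$, $x_{[i,j)}=x_i\cdots x_{j-1}$. A dill map with diameter $\delta\ge1$ and local rule $f:A^\delta\to A^+$ (nonempty words) is $F(x)=f(x_{[0,\delta)})f(x_{[1,\delta+1)})\cdots$. Lower norm $\lfloor f\rfloor=\min\{|f(u)|:u\in A^\delta\}$, upper norm $\lceil f\rceil=\max\{|f(u)|:u\in A^\delta\}$; $F$ is uniform if $\lfloor f\rfloor=\lceil f\rceil$. For words $u,v$ of equal length, $d_H(u,v)$ is the number of positions where they differ. $D_{\max}=\max\{d_H(f(u),f(v)):u,v\in A^\delta\}$ (taken over pairs with $|f(u)|=|f(v)|$). The Besicovitch pseudo-metric is $\mathfrak d_H(x,y)=\limsup_{l\to\infty}\frac{d_H(x_{[0,l)},y_{[0,l)})}{l}$. *)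

theory Defs
  imports "HOL-Library.Liminf_Limsup" "HOL-Library.Extended_Real"
begin

definition factor :: "(nat \<Rightarrow> 'a) \<Rightarrow> nat \<Rightarrow> nat \<Rightarrow> 'a list" where
  "factor x i j = map x [i..<j]"

definition dill_block :: "('a list \<Rightarrow> 'b list) \<Rightarrow> nat \<Rightarrow> (nat \<Rightarrow> 'a) \<Rightarrow> nat \<Rightarrow> 'b list" where
  "dill_block f \<delta> x k = f (factor x k (k + \<delta>))"

definition dill_start :: "('a list \<Rightarrow> 'b list) \<Rightarrow> nat \<Rightarrow> (nat \<Rightarrow> 'a) \<Rightarrow> nat \<Rightarrow> nat" where
  "dill_start f \<delta> x k = (\<Sum>i<k. length (dill_block f \<delta> x i))"

text \<open>The dill map F(x) = f(x_[0,delta)) f(x_[1,delta+1)) ... (infinite concatenation);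
  position n lies in the first block k whose end exceeds n.\<close>
definition dill_map :: "('a list \<Rightarrow> 'b list) \<Rightarrow> nat \<Rightarrow> (nat \<Rightarrow> 'a) \<Rightarrow> nat \<Rightarrow> 'b" where
  "dill_map f \<delta> x n =
     (let k = (LEAST k. n < dill_start f \<delta> x (Suc k))
      in dill_block f \<delta> x k ! (n - dill_start f \<delta> x k))"

definition local_rule :: "nat \<Rightarrow> ('a list \<Rightarrow> 'b list) \<Rightarrow> bool" where
  "local_rule \<delta> f \<longleftrightarrow> 1 \<le> \<delta> \<and> (\<forall>u. length u = \<delta> \<longrightarrow> f u \<noteq> [])"

definition lower_norm :: "nat \<Rightarrow> ('a list \<Rightarrow> 'b list) \<Rightarrow> nat" where
  "lower_norm \<delta> f = Min ((\<lambda>u. length (f u)) ` {u. length u = \<delta>})"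

definition upper_norm :: "nat \<Rightarrow> ('a list \<Rightarrow> 'b list) \<Rightarrow> nat" where
  "upper_norm \<delta> f = Max ((\<lambda>u. length (f u)) ` {u. length u = \<delta>})"

definition uniform :: "nat \<Rightarrow> ('a list \<Rightarrow> 'b list) \<Rightarrow> bool" where
  "uniform \<delta> f \<longleftrightarrow> lower_norm \<delta> f = upper_norm \<delta> f"

text \<open>Hamming distance of words (intended for equal lengths).\<close>
definition hamming :: "'a list \<Rightarrow> 'a list \<Rightarrow> nat" where
  "hamming u v = card {i. i < length u \<and> u ! i \<noteq> v ! i}"

definition D_max :: "nat \<Rightarrow> ('a list \<Rightarrow> 'b list) \<Rightarrow> nat" where
  "D_max \<delta> f = Max {hamming (f u) (f v) | u v.
      length u = \<delta> \<and> length v = \<delta> \<and> length (f u) = length (f v)}"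

definition besicovitch :: "(nat \<Rightarrow> 'a) \<Rightarrow> (nat \<Rightarrow> 'a) \<Rightarrow> ereal" where
  "besicovitch x y =
     limsup (\<lambda>l. ereal (real (card {i. i < l \<and> x i \<noteq> y i}) / real l))"

end

theory Submission
  imports Defs
begin


definition sh :: "(nat \<Rightarrow> 'a) \<Rightarrow> nat \<Rightarrow> nat \<Rightarrow> 'a" where "sh x m = (\<lambda>i. x (i + m))"

lemma factor_sh: "factor (sh x m) k (k + d) = factor x (k + m) (k + m + d)"
  unfolding factor_def sh_def by (induction d) (auto simp: ac_simps)

lemma block_sh: "dill_block f \<delta> (sh x m) k = dill_block f \<delta> x (k + m)"
  unfolding dill_block_def by (simp add: factor_sh)

lemma start_Suc: "dill_start f \<delta> x (Suc k) = dill_start f \<delta> x k + length (dill_block f \<delta> x k)"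
  by (simp add: dill_start_def)

lemma start_0[simp]: "dill_start f \<delta> x 0 = 0"
  by (simp add: dill_start_def)

lemma start_add: "dill_start f \<delta> x (m + k) = dill_start f \<delta> x m + dill_start f \<delta> (sh x m) k"
  by (induction k) (simp_all add: start_Suc block_sh add.commute)

lemma sh_sh: "sh (sh x m) k = sh x (m + k)" unfolding sh_def by (simp add: ac_simps)
lemma sh_0[simp]: "sh x 0 = x" unfolding sh_def by simp

context
  fixes f :: "'a list \<Rightarrow> 'b list" and \<delta> :: nat
  assumes lr: "local_rule \<delta> f"
begin

lemma block_pos: "0 < length (dill_block f \<delta> x k)"
  using lr unfolding local_rule_def dill_block_def by (simp add: factor_def)

lemma start_strict: "k < k' \<Longrightarrow> dill_start f \<delta> x k < dill_start f \<delta> x k'"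
proof (induction k' arbitrary: k)
  case 0 then show ?case by simp
next
  case (Suc k')
  show ?case
  proof (cases "k = k'")
    case True then show ?thesis using block_pos[of x k'] unfolding start_Suc True by linarith
  next
    case False then have "k < k'" using Suc.prems by simp
    then show ?thesis using Suc.IH[of k] block_pos[of x k'] unfolding start_Suc by linarith
  qed
qed

lemma start_mono: "k \<le> k' \<Longrightarrow> dill_start f \<delta> x k \<le> dill_start f \<delta> x k'"
  using start_strict by (cases "k = k'") (auto intro: less_imp_le)

lemma start_ge: "k \<le> dill_start f \<delta> x k"
proof (induction k)
  case 0 then show ?case by simp
next
  case (Suc k) then show ?case using block_pos[of x k] unfolding start_Suc by linarith
qed

lemma map_at:
  assumes "i < length (dill_block f \<delta> x k)"
  shows "dill_map f \<delta> x (dill_start f \<delta> x k + i) = dill_block f \<delta> x k ! i"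
proof -
  have "(LEAST k'. dill_start f \<delta> x k + i < dill_start f \<delta> x (Suc k')) = k"
  proof (rule Least_equality)
    show "dill_start f \<delta> x k + i < dill_start f \<delta> x (Suc k)" using assms by (simp add: start_Suc)
  next
    fix y assume "dill_start f \<delta> x k + i < dill_start f \<delta> x (Suc y)"
    then show "k \<le> y" using start_mono[of "Suc y" k x] by (cases "k \<le> y") auto
  qed
  then show ?thesis unfolding dill_map_def by (simp add: Let_def)
qed

lemma decomp: "\<exists>k i. n = dill_start f \<delta> x k + i \<and> i < length (dill_block f \<delta> x k)"
proof -
  have ex: "\<exists>k. n < dill_start f \<delta> x (Suc k)" using start_ge[of "Suc n" x] by (metis Suc_le_eq)
  define k where "k = (LEAST k. n < dill_start f \<delta> x (Suc k))"
  have k1: "n < dill_start f \<delta> x (Suc k)" unfolding k_def using ex by (rule LeastI_ex)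
  have k2: "dill_start f \<delta> x k \<le> n"
  proof (cases k)
    case 0 then show ?thesis by simp
  next
    case (Suc k')
    have "\<not> n < dill_start f \<delta> x (Suc k')" using Suc k_def not_less_Least[of k' "\<lambda>k. n < dill_start f \<delta> x (Suc k)"] by simp
    then show ?thesis using Suc by simp
  qed
  show ?thesis using k1 k2 by (intro exI[of _ k] exI[of _ "n - dill_start f \<delta> x k"]) (simp add: start_Suc)
qed

lemma map_sh: "dill_map f \<delta> x (dill_start f \<delta> x m + j) = dill_map f \<delta> (sh x m) j"
proof -
  obtain k i where ki: "j = dill_start f \<delta> (sh x m) k + i" "i < length (dill_block f \<delta> (sh x m) k)"
    using decomp by blast
  have "dill_start f \<delta> x m + j = dill_start f \<delta> x (m + k) + i" by (simp add: ki start_add)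
  moreover have "dill_block f \<delta> (sh x m) k = dill_block f \<delta> x (m + k)" by (simp add: block_sh add.commute)
  ultimately show ?thesis using ki map_at by metis
qed

lemma local_block: "(\<And>i. i < k + \<delta> \<Longrightarrow> x i = y i) \<Longrightarrow> dill_block f \<delta> x k = dill_block f \<delta> y k"
  unfolding dill_block_def factor_def by (intro arg_cong[where f=f] map_cong) auto

lemma local_start: "(\<And>i. i < M + \<delta> \<Longrightarrow> x i = y i) \<Longrightarrow> k \<le> M \<Longrightarrow> dill_start f \<delta> x k = dill_start f \<delta> y k"
proof (induction k)
  case 0 then show ?case by simp
next
  case (Suc k)
  have "dill_block f \<delta> x k = dill_block f \<delta> y k" using Suc.prems by (intro local_block) auto
  then show ?case using Suc by (simp add: start_Suc)
qed

lemma local_map: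
  assumes "\<And>i. i < M + \<delta> \<Longrightarrow> x i = y i" "n < dill_start f \<delta> x M"
  shows "dill_map f \<delta> x n = dill_map f \<delta> y n"
proof -
  obtain k i where ki: "n = dill_start f \<delta> x k + i" "i < length (dill_block f \<delta> x k)"
    using decomp by blast
  have "k < M"
  proof (rule ccontr)
    assume "\<not> k < M" then have "dill_start f \<delta> x M \<le> dill_start f \<delta> x k" by (intro start_mono) simp
    then show False using ki assms(2) by simp
  qed
  then have e1: "dill_block f \<delta> x k = dill_block f \<delta> y k" using assms(1) by (intro local_block) auto
  have e2: "dill_start f \<delta> x k = dill_start f \<delta> y k" using assms(1) \<open>k < M\<close> by (intro local_start[of M]) auto
  show ?thesis using ki e1 e2 map_at by metis
qed

end


definition ratio :: "(nat \<Rightarrow> 'a) \<Rightarrow> (nat \<Rightarrow> 'a) \<Rightarrow> nat \<Rightarrow> real" where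
  "ratio x y l = real (card {i. i < l \<and> x i \<noteq> y i}) / real l"

lemma bes_def': "besicovitch x y = limsup (\<lambda>l. ereal (ratio x y l))"
  unfolding besicovitch_def ratio_def ..

lemma card_lt_le: "card {i. i < l \<and> P i} \<le> l"
proof -
  have "card {i. i < l \<and> P i} \<le> card {..<l}" by (intro card_mono) auto
  then show ?thesis by simp
qed

lemma ratio_nonneg: "0 \<le> ratio x y l" unfolding ratio_def by simp

lemma ratio_le1: "ratio x y l \<le> 1"
proof (cases "l = 0")
  case True then show ?thesis by (simp add: ratio_def)
next
  case False
  have "real (card {i. i < l \<and> x i \<noteq> y i}) \<le> real l" using card_lt_le by simp
  then show ?thesis using False unfolding ratio_def by simp
qed

lemma bes_nonneg: "0 \<le> besicovitch x y"
proof -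
  have "0 \<le> liminf (\<lambda>l. ereal (ratio x y l))" by (intro Liminf_bounded) (simp add: ratio_nonneg)
  also have "\<dots> \<le> limsup (\<lambda>l. ereal (ratio x y l))" by (rule Liminf_le_Limsup) simp
  finally show ?thesis by (simp add: bes_def')
qed

lemma bes_zero_iff: "besicovitch x y = 0 \<longleftrightarrow> ratio x y \<longlonglongrightarrow> 0"
proof
  assume h: "besicovitch x y = 0"
  have "0 \<le> liminf (\<lambda>l. ereal (ratio x y l))" by (intro Liminf_bounded) (simp add: ratio_nonneg)
  moreover have "liminf (\<lambda>l. ereal (ratio x y l)) \<le> limsup (\<lambda>l. ereal (ratio x y l))" by (rule Liminf_le_Limsup) simp
  ultimately have "liminf (\<lambda>l. ereal (ratio x y l)) = ereal 0" using h by (simp add: bes_def')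
  moreover have "limsup (\<lambda>l. ereal (ratio x y l)) = ereal 0" using h by (simp add: bes_def')
  ultimately have "(\<lambda>l. ereal (ratio x y l)) \<longlonglongrightarrow> ereal 0" by (intro Liminf_eq_Limsup) simp_all
  then show "ratio x y \<longlonglongrightarrow> 0" by simp
next
  assume "ratio x y \<longlonglongrightarrow> 0"
  then have "(\<lambda>l. ereal (ratio x y l)) \<longlonglongrightarrow> ereal 0" by simp
  then have "limsup (\<lambda>l. ereal (ratio x y l)) = ereal 0" by (intro lim_imp_Limsup) simp_all
  then show "besicovitch x y = 0" by (simp add: bes_def')
qed

lemma fin_diff:
  assumes "\<And>i. M \<le> i \<Longrightarrow> x i = y i"
  shows "ratio x y \<longlonglongrightarrow> 0"
proof (rule tendsto_sandwich[of "\<lambda>_. 0" _ _ "\<lambda>l. real M / real l"])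
  show "\<forall>\<^sub>F l in sequentially. 0 \<le> ratio x y l" by (simp add: ratio_nonneg)
  show "\<forall>\<^sub>F l in sequentially. ratio x y l \<le> real M / real l"
  proof (intro always_eventually allI)
    fix l
    have "{i. i < l \<and> x i \<noteq> y i} \<subseteq> {..<M}" using assms by (auto simp: not_less[symmetric])
    then have "card {i. i < l \<and> x i \<noteq> y i} \<le> M" using card_mono[of "{..<M}"] by fastforce
    then show "ratio x y l \<le> real M / real l" unfolding ratio_def by (simp add: divide_right_mono)
  qed
  show "(\<lambda>l. real M / real l) \<longlonglongrightarrow> 0" by (rule lim_const_over_n)
qed simp

lemma ratio_sh:
  assumes "ratio x y \<longlonglongrightarrow> 0"
  shows "ratio (sh x T) (sh y T) \<longlonglongrightarrow> 0"
proof (rule tendsto_sandwich[of "\<lambda>_. 0" _ _ "\<lambda>l. ratio x y (l + T) * (1 + real T / real l)"])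
  show "\<forall>\<^sub>F l in sequentially. 0 \<le> ratio (sh x T) (sh y T) l" by (simp add: ratio_nonneg)
  show "\<forall>\<^sub>F l in sequentially. ratio (sh x T) (sh y T) l \<le> ratio x y (l + T) * (1 + real T / real l)"
  proof (rule eventually_sequentiallyI[of 1])
    fix l :: nat assume l: "1 \<le> l"
    let ?A = "{i. i < l \<and> sh x T i \<noteq> sh y T i}"
    let ?B = "{i. i < l + T \<and> x i \<noteq> y i}"
    have sub: "(\<lambda>i. i + T) ` ?A \<subseteq> ?B"
      by (auto simp: sh_def)
    have inj: "inj_on (\<lambda>i. i + T) ?A" by (auto simp: inj_on_def)
    have "card ?A = card ((\<lambda>i. i + T) ` ?A)" by (rule card_image[symmetric]) (rule inj)
    also have "\<dots> \<le> card ?B" by (rule card_mono) (simp, rule sub)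
    finally have c: "card ?A \<le> card ?B" .
    have q: "1 + real T / real l = real (l + T) / real l" using l by (simp add: field_simps)
    have "ratio x y (l + T) * (1 + real T / real l) = real (card ?B) / real (l + T) * (real (l + T) / real l)"
      unfolding q ratio_def ..
    also have "\<dots> = real (card ?B) / real l" using l by simp
    finally have eq: "ratio x y (l + T) * (1 + real T / real l) = real (card ?B) / real l" .
    show "ratio (sh x T) (sh y T) l \<le> ratio x y (l + T) * (1 + real T / real l)"
      unfolding eq unfolding ratio_def using c by (intro divide_right_mono) simp_all
  qed
  have t1: "(\<lambda>l. ratio x y (l + T)) \<longlonglongrightarrow> 0" using LIMSEQ_ignore_initial_segment[OF assms, of T] .
  have t2: "(\<lambda>l. 1 + real T / real l) \<longlonglongrightarrow> 1 + 0" using tendsto_add[OF tendsto_const lim_const_over_n] .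
  have "(\<lambda>l. ratio x y (l + T) * (1 + real T / real l)) \<longlonglongrightarrow> 0 * (1 + 0)"
    using tendsto_mult[OF t1 t2] .
  then show "(\<lambda>l. ratio x y (l + T) * (1 + real T / real l)) \<longlonglongrightarrow> 0" by simp
qed simp

lemma per_lemma:
  assumes perG: "\<And>j. G (j + P) = G j" and P: "0 < P"
    and lim: "ratio G (sh G T) \<longlonglongrightarrow> 0"
  shows "G (j + T) = G j"
proof (rule ccontr)
  assume nj: "G (j + T) \<noteq> G j"
  have perk: "G (i + k * P) = G i" for i k
  proof (induction k)
    case (Suc k) then show ?case using perG[of "i + k * P"] by (simp add: algebra_simps)
  qed simp
  define j0 where "j0 = j mod P"
  have j0P: "j0 < P" using P by (simp add: j0_def)
  have e: "j = j0 + (j div P) * P" by (simp add: j0_def)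
  have e1: "G j = G j0" using perk[of j0 "j div P"] e by simp
  have h: "j + T = (j0 + T) + (j div P) * P" using e by simp
  have e2: "G (j + T) = G (j0 + T)" unfolding h by (rule perk)
  have nj0: "G (j0 + T) \<noteq> G j0" using nj e1 e2 by simp
  have ev: "\<forall>\<^sub>F l in sequentially. ratio G (sh G T) l < 1 / (2 * real P)"
    using lim P by (intro order_tendstoD(2)) auto
  then obtain N where N: "\<And>l. N \<le> l \<Longrightarrow> ratio G (sh G T) l < 1 / (2 * real P)"
    by (auto simp: eventually_sequentially)
  define l where "l = (N + 2) * P"
  have "(\<lambda>k. j0 + k * P) ` {..<N+1} \<subseteq> {i. i < l \<and> G i \<noteq> sh G T i}"
  proof
    fix i assume "i \<in> (\<lambda>k. j0 + k * P) ` {..<N+1}"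
    then obtain k where k: "k < N + 1" "i = j0 + k * P" by auto
    have "k * P \<le> N * P" using k by simp
    moreover have "l = N * P + 2 * P" unfolding l_def by (simp add: algebra_simps)
    ultimately have "i < l" using k j0P by linarith
    moreover have "G i \<noteq> sh G T i" using k nj0 perk[of j0 k] perk[of "j0 + T" k]
      by (simp add: sh_def ac_simps)
    ultimately show "i \<in> {i. i < l \<and> G i \<noteq> sh G T i}" by simp
  qed
  moreover have "inj_on (\<lambda>k. j0 + k * P) {..<N+1}" using P by (auto simp: inj_on_def)
  moreover have "finite {i. i < l \<and> G i \<noteq> sh G T i}" by simp
  ultimately have "card ((\<lambda>k. j0 + k * P) ` {..<N+1}) \<le> card {i. i < l \<and> G i \<noteq> sh G T i}"
    "card ((\<lambda>k. j0 + k * P) ` {..<N+1}) = N + 1"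
    using card_mono card_image by (blast, fastforce)
  then have "N + 1 \<le> card {i. i < l \<and> G i \<noteq> sh G T i}" by simp
  then have r: "real (N + 1) / real l \<le> ratio G (sh G T) l"
    unfolding ratio_def by (intro divide_right_mono) auto
  have rl: "real l = (real N + 2) * real P" unfolding l_def by (simp add: algebra_simps)
  have "(real N + 2) * real P \<le> (2 * real N + 2) * real P" by (intro mult_right_mono) auto
  then have l2: "real l \<le> real (N + 1) * (2 * real P)" using rl by (simp add: algebra_simps)
  have lpos: "0 < real l" using rl P by simp
  have "1 / (2 * real P) = real (N + 1) / (real (N + 1) * (2 * real P))" using P by simp
  also have "\<dots> \<le> real (N + 1) / real l"
    by (rule divide_left_mono[OF l2]) (use lpos P in auto)
  finally have "1 / (2 * real P) \<le> real (N + 1) / real l" .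
  moreover have "N \<le> l"
  proof -
    have "N * 1 \<le> (N + 2) * P" using P by (intro mult_le_mono) auto
    then show ?thesis unfolding l_def by simp
  qed
  ultimately show False using N[of l] r by linarith
qed


definition pre :: "'a list \<Rightarrow> (nat \<Rightarrow> 'a) \<Rightarrow> nat \<Rightarrow> 'a" where
  "pre p s i = (if i < length p then p ! i else s (i - length p))"

lemma sh_pre: "sh (pre p s) (length p) = s" unfolding sh_def pre_def by auto

lemma sh_pre1: "p \<noteq> [] \<Longrightarrow> sh (pre p s) 1 = pre (tl p) s"
  unfolding sh_def pre_def by (cases p) (auto simp: fun_eq_iff)

lemma factor_pre: "factor (pre p s) 0 (length p) = p"
  unfolding factor_def pre_def by (rule nth_equalityI) auto

lemma sh_apply: "sh x m i = x (i + m)" by (simp add: sh_def)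

lemma per_iter: fixes G :: "nat \<Rightarrow> 'b" and P j k :: nat assumes "\<And>j. G (j + P) = G j" shows "G (j + k * P) = G j"
proof (induction k)
  case (Suc k)
  have "G (j + Suc k * P) = G ((j + k * P) + P)" by (simp add: algebra_simps)
  then show ?case using assms Suc by simp
qed simp

lemma per_mod: fixes G :: "nat \<Rightarrow> 'b" and P j :: nat assumes "\<And>j. G (j + P) = G j" shows "G j = G (j mod P)"
  using per_iter[of G P "j mod P" "j div P", OF assms] mod_div_mult_eq[of j P] by simp

lemma fin_words: "finite {u :: 'a::finite list. length u = n}"
  using finite_lists_length_eq[of "UNIV :: 'a set" n] by simp

context
  fixes f :: "'a::finite list \<Rightarrow> 'a list" and \<delta> :: nat
  assumes lr: "local_rule \<delta> f"
begin

lemma delta_pos: "1 \<le> \<delta>" using lr by (simp add: local_rule_def)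

lemma len_le_U: "length u = \<delta> \<Longrightarrow> length (f u) \<le> upper_norm \<delta> f"
  unfolding upper_norm_def by (rule Max_ge) (use fin_words in auto)

lemma block_le_U: "length (dill_block f \<delta> x k) \<le> upper_norm \<delta> f"
  unfolding dill_block_def by (rule len_le_U) (simp add: factor_def)

lemma start_le: "dill_start f \<delta> x k \<le> k * upper_norm \<delta> f"
proof (induction k)
  case (Suc k) then show ?case using block_le_U[of x k] by (simp add: start_Suc)
qed simp

lemma key:
  assumes H1: "\<forall>x y. besicovitch x y = 0 \<longrightarrow> besicovitch (dill_map f \<delta> x) (dill_map f \<delta> y) = 0"
    and agree: "\<And>i. m \<le> i \<Longrightarrow> x1 i = x2 i"
    and le: "dill_start f \<delta> x2 m \<le> dill_start f \<delta> x1 m"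
    and perG: "\<And>j. dill_map f \<delta> (sh x1 m) (j + P) = dill_map f \<delta> (sh x1 m) j" and P: "0 < P"
  shows "dill_map f \<delta> (sh x1 m) (j + (dill_start f \<delta> x1 m - dill_start f \<delta> x2 m)) = dill_map f \<delta> (sh x1 m) j"
proof -
  let ?S1 = "dill_start f \<delta> x1 m" and ?S2 = "dill_start f \<delta> x2 m"
  let ?G = "dill_map f \<delta> (sh x1 m)"
  have "besicovitch x1 x2 = 0" using fin_diff[of m x1 x2] agree by (simp add: bes_zero_iff)
  then have "ratio (dill_map f \<delta> x1) (dill_map f \<delta> x2) \<longlonglongrightarrow> 0" using H1 by (simp add: bes_zero_iff)
  then have r: "ratio (sh (dill_map f \<delta> x1) ?S1) (sh (dill_map f \<delta> x2) ?S1) \<longlonglongrightarrow> 0" by (rule ratio_sh)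
  have e1: "sh (dill_map f \<delta> x1) ?S1 = ?G"
  proof
    fix i show "sh (dill_map f \<delta> x1) ?S1 i = ?G i" using map_sh[OF lr, of x1 m i] by (simp add: sh_apply add.commute)
  qed
  have shx: "sh x2 m = sh x1 m" using agree unfolding sh_def by auto
  have e2: "sh (dill_map f \<delta> x2) ?S1 = sh ?G (?S1 - ?S2)"
  proof
    fix i
    have "sh (dill_map f \<delta> x2) ?S1 i = dill_map f \<delta> x2 (?S2 + (i + (?S1 - ?S2)))"
      using le by (simp add: sh_apply algebra_simps)
    also have "\<dots> = dill_map f \<delta> (sh x2 m) (i + (?S1 - ?S2))" by (rule map_sh[OF lr])
    finally show "sh (dill_map f \<delta> x2) ?S1 i = sh ?G (?S1 - ?S2) i" using shx by (simp add: sh_apply)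
  qed
  have "ratio ?G (sh ?G (?S1 - ?S2)) \<longlonglongrightarrow> 0" using r unfolding e1 e2 .
  then show ?thesis using per_lemma[of ?G P "?S1 - ?S2" j] perG P by blast
qed

end


context
  fixes f :: "'a::finite list \<Rightarrow> 'a list" and \<delta> :: nat
  assumes lr: "local_rule \<delta> f"
begin

lemma nonuniform_ex:
  assumes "\<not> uniform \<delta> f"
  obtains u v where "length u = \<delta>" "length v = \<delta>" "length (f u) \<noteq> length (f v)"
proof -
  let ?S = "(\<lambda>u. length (f u)) ` {u. length u = \<delta>}"
  have "\<exists>u v. length u = \<delta> \<and> length v = \<delta> \<and> length (f u) \<noteq> length (f v)"
  proof (rule ccontr)
    assume all: "\<not> ?thesis"
    define u0 where "u0 = replicate \<delta> (undefined :: 'a)"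
    have u0: "length u0 = \<delta>" by (simp add: u0_def)
    have "?S = {length (f u0)}"
    proof (intro equalityI subsetI)
      fix k assume "k \<in> ?S"
      then obtain u where "length u = \<delta>" "k = length (f u)" by blast
      then show "k \<in> {length (f u0)}" using all u0 by blast
    next
      fix k assume "k \<in> {length (f u0)}"
      then show "k \<in> ?S" using u0 by blast
    qed
    then have "uniform \<delta> f" unfolding uniform_def lower_norm_def upper_norm_def by simp
    then show False using assms by simp
  qed
  then show ?thesis using that by blast
qed

lemma tele:
  assumes "length u = \<delta>"
  shows "dill_start f \<delta> (pre u s) \<delta> = length (f u) + dill_start f \<delta> (pre (tl u) s) (\<delta> - 1)"
proof -
  have ne: "u \<noteq> []" using assms delta_pos[OF lr] by auto
  have "dill_start f \<delta> (pre u s) \<delta> = dill_start f \<delta> (pre u s) (1 + (\<delta> - 1))" using delta_pos[OF lr] by simp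
  also have "\<dots> = dill_start f \<delta> (pre u s) 1 + dill_start f \<delta> (sh (pre u s) 1) (\<delta> - 1)" by (rule start_add)
  also have "dill_start f \<delta> (pre u s) 1 = length (f u)"
    using factor_pre[of u s] assms by (simp add: start_Suc[where k=0, simplified] dill_block_def)
  also have "sh (pre u s) 1 = pre (tl u) s" using ne by (rule sh_pre1)
  finally show ?thesis .
qed

lemma two_pre:
  assumes H1: "\<forall>x y. besicovitch x y = 0 \<longrightarrow> besicovitch (dill_map f \<delta> x) (dill_map f \<delta> y) = 0"
    and len: "length p1 = m" "length p2 = m"
    and ne: "dill_start f \<delta> (pre p1 s) m \<noteq> dill_start f \<delta> (pre p2 s) m"
    and perG: "\<And>j. dill_map f \<delta> s (j + P) = dill_map f \<delta> s j" and P: "0 < P"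
  shows "\<exists>D. 0 < D \<and> D \<le> m * upper_norm \<delta> f \<and> (\<forall>j. dill_map f \<delta> s (j + D) = dill_map f \<delta> s j)"
proof -
  have ag: "\<And>i. m \<le> i \<Longrightarrow> pre p1 s i = pre p2 s i" using len by (simp add: pre_def)
  have sh1: "sh (pre p1 s) m = s" using sh_pre[of p1 s] len by simp
  have sh2: "sh (pre p2 s) m = s" using sh_pre[of p2 s] len by simp
  let ?A = "dill_start f \<delta> (pre p1 s) m" and ?B = "dill_start f \<delta> (pre p2 s) m"
  have bA: "?A \<le> m * upper_norm \<delta> f" by (rule start_le[OF lr])
  have bB: "?B \<le> m * upper_norm \<delta> f" by (rule start_le[OF lr])
  show ?thesis
  proof (cases "?B < ?A")
    case True
    have "dill_map f \<delta> (sh (pre p1 s) m) (j + (?A - ?B)) = dill_map f \<delta> (sh (pre p1 s) m) j" for j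
      by (rule key[OF lr H1, of m _ _ P]) (use ag True perG P sh1 in auto)
    then show ?thesis using True bA unfolding sh1 by (intro exI[of _ "?A - ?B"]) auto
  next
    case False then have lt: "?A < ?B" using ne by simp
    have "dill_map f \<delta> (sh (pre p2 s) m) (j + (?B - ?A)) = dill_map f \<delta> (sh (pre p2 s) m) j" for j
      by (rule key[OF lr H1, of m _ _ P]) (use ag lt perG P sh2 in auto)
    then show ?thesis using lt bB unfolding sh2 by (intro exI[of _ "?B - ?A"]) auto
  qed
qed

lemma shift_D:
  assumes H1: "\<forall>x y. besicovitch x y = 0 \<longrightarrow> besicovitch (dill_map f \<delta> x) (dill_map f \<delta> y) = 0"
    and nu: "\<not> uniform \<delta> f"
    and perG: "\<And>j. dill_map f \<delta> s (j + P) = dill_map f \<delta> s j" and P: "0 < P"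
  shows "\<exists>D. 0 < D \<and> D \<le> \<delta> * upper_norm \<delta> f \<and> (\<forall>j. dill_map f \<delta> s (j + D) = dill_map f \<delta> s j)"
proof -
  obtain u v where uv: "length u = \<delta>" "length v = \<delta>" "length (f u) \<noteq> length (f v)"
    using nonuniform_ex[OF nu] by blast
  show ?thesis
  proof (cases "dill_start f \<delta> (pre u s) \<delta> = dill_start f \<delta> (pre v s) \<delta>")
    case False
    then show ?thesis using two_pre[OF H1 uv(1,2) False perG P] by blast
  next
    case True
    then have ne: "dill_start f \<delta> (pre (tl u) s) (\<delta> - 1) \<noteq> dill_start f \<delta> (pre (tl v) s) (\<delta> - 1)"
      using tele[OF uv(1), of s] tele[OF uv(2), of s] uv(3) by simp
    have l: "length (tl u) = \<delta> - 1" "length (tl v) = \<delta> - 1" using uv by simp_all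
    obtain D where D: "0 < D" "D \<le> (\<delta> - 1) * upper_norm \<delta> f" "\<forall>j. dill_map f \<delta> s (j + D) = dill_map f \<delta> s j"
      using two_pre[OF H1 l ne perG P] by blast
    have "(\<delta> - 1) * upper_norm \<delta> f \<le> \<delta> * upper_norm \<delta> f" by (intro mult_right_mono) auto
    then have "D \<le> \<delta> * upper_norm \<delta> f" using D(2) by linarith
    then show ?thesis using D(1,3) by blast
  qed
qed

end


context
  fixes f :: "'a::finite list \<Rightarrow> 'a list" and \<delta> :: nat
  assumes lr: "local_rule \<delta> f"
begin

lemma const_case:
  assumes H1: "\<forall>x y. besicovitch x y = 0 \<longrightarrow> besicovitch (dill_map f \<delta> x) (dill_map f \<delta> y) = 0"
    and nu: "\<not> uniform \<delta> f"
  shows "\<exists>c. \<forall>x. dill_map f \<delta> x = c"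
proof -
  define a :: 'a where "a = undefined"
  define ca :: "nat \<Rightarrow> 'a" where "ca = (\<lambda>_. a)"
  define c where "c = dill_map f \<delta> ca"
  define L where "L = length (f (replicate \<delta> a))"
  define U where "U = upper_norm \<delta> f"
  have blk_ca: "dill_block f \<delta> ca k = f (replicate \<delta> a)" for k
    unfolding dill_block_def factor_def ca_def by (simp add: map_replicate_const)
  have L: "0 < L" using block_pos[OF lr, of ca 0] unfolding blk_ca L_def .
  have st_ca: "dill_start f \<delta> ca k = k * L" for k
    unfolding dill_start_def blk_ca L_def by simp
  have sh_ca: "sh ca m = ca" for m by (simp add: sh_def ca_def)
  have cL: "c (j + L) = c j" for j
    using map_sh[OF lr, of ca 1 j] unfolding c_def sh_ca st_ca by (simp add: add.commute)
  have c_per: "c (j + dill_start f \<delta> y M) = c j" if y: "\<And>i. M \<le> i \<Longrightarrow> y i = a" for y M j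
  proof -
    have ag: "\<And>i. M \<le> i \<Longrightarrow> y i = ca i" using y by (simp add: ca_def)
    have shy: "sh y M = ca" using y by (auto simp: sh_def ca_def fun_eq_iff)
    let ?T = "dill_start f \<delta> y M"
    show ?thesis
    proof (cases "M * L \<le> ?T")
      case True
      have "dill_map f \<delta> (sh y M) (j' + (?T - dill_start f \<delta> ca M)) = dill_map f \<delta> (sh y M) j'" for j'
        by (rule key[OF lr H1, of M _ _ L]) (use ag True st_ca shy cL L c_def in auto)
      then have k: "c (j' + (?T - M * L)) = c j'" for j' unfolding shy st_ca c_def .
      have "c (j + ?T) = c ((j + (?T - M * L)) + M * L)" using True by (simp add: algebra_simps)
      also have "\<dots> = c (j + (?T - M * L))" by (rule per_iter) (rule cL)
      also have "\<dots> = c j" by (rule k)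
      finally show ?thesis .
    next
      case False
      have "dill_map f \<delta> (sh ca M) (j' + (dill_start f \<delta> ca M - ?T)) = dill_map f \<delta> (sh ca M) j'" for j'
        by (rule key[OF lr H1, of M _ _ L]) (use ag False st_ca sh_ca cL L c_def in auto)
      then have k: "c (j' + (M * L - ?T)) = c j'" for j' unfolding sh_ca st_ca c_def .
      have "c (j + ?T) = c ((j + ?T) + (M * L - ?T))" by (rule k[symmetric])
      also have "\<dots> = c (j + M * L)" using False by (simp add: algebra_simps)
      also have "\<dots> = c j" by (rule per_iter) (rule cL)
      finally show ?thesis .
    qed
  qed
  define M0 where "M0 = \<delta> * U + 1"
  define K where "K = M0 + \<delta>"
  have main: "dill_map f \<delta> x n = c n" for x n
  proof -
    define N where "N = n + \<delta> + 1"
    define m where "m = K + N"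
    define s' where "s' = (\<lambda>i. if i mod m < K then a else x (i mod m - K))"
    have m0: "0 < m" unfolding m_def N_def by simp
    have s'_per: "sh s' m = s'" by (simp add: sh_def s'_def fun_eq_iff)
    define G where "G = dill_map f \<delta> s'"
    define P where "P = dill_start f \<delta> s' m"
    have P: "0 < P" using start_ge[OF lr, of m s'] m0 unfolding P_def by linarith
    have perG: "G (j + P) = G j" for j
      using map_sh[OF lr, of s' m j] unfolding s'_per G_def P_def by (simp add: add.commute)
    obtain D where D: "0 < D" "D \<le> \<delta> * U" "\<And>j. G (j + D) = G j"
      using shift_D[OF lr H1 nu, of s' P] perG P unfolding G_def U_def by blast
    have s'a: "s' i = a" if "i < K" for i
      using that unfolding s'_def m_def by simp
    have Gc: "G j = c j" if "j < M0 * L" for j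
    proof -
      have "dill_map f \<delta> ca j = dill_map f \<delta> s' j"
        by (rule local_map[OF lr, of M0]) (use s'a that st_ca in \<open>auto simp: ca_def K_def\<close>)
      then show ?thesis unfolding G_def c_def by simp
    qed
    have bnd: "\<delta> * U + L \<le> M0 * L"
    proof -
      have "\<delta> * U * 1 \<le> \<delta> * U * L" using L by (intro mult_le_mono2) simp
      then show ?thesis unfolding M0_def by (simp add: algebra_simps)
    qed
    have cD: "c (i + D) = c i" for i
    proof -
      have lt: "i mod L < L" using L by simp
      have "c (i + D) = c ((i mod L + D) + (i div L) * L)" by (simp add: algebra_simps)
      also have "\<dots> = c (i mod L + D)" by (rule per_iter) (rule cL)
      also have "\<dots> = G (i mod L + D)" using Gc[of "i mod L + D"] lt D(2) bnd by simp
      also have "\<dots> = G (i mod L)" by (rule D(3))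
      also have "\<dots> = c (i mod L)" using Gc[of "i mod L"] lt bnd by simp
      also have "\<dots> = c i" by (rule per_mod[symmetric]) (rule cL)
      finally show ?thesis .
    qed
    have Gall: "G j = c j" for j
    proof -
      have "G j = G (j mod D)" by (rule per_mod) (rule D(3))
      also have "\<dots> = c (j mod D)"
      proof -
        have "j mod D < D" using D(1) by (rule mod_less_divisor)
        then have "j mod D < M0 * L" using D(2) bnd by linarith
        then show ?thesis by (rule Gc)
      qed
      also have "\<dots> = c j" by (rule per_mod[symmetric]) (rule cD)
      finally show ?thesis .
    qed
    define y where "y = (\<lambda>i. if i < K then a else if i < m then x (i - K) else a)"
    have ys': "y i = s' i" if "i < m" for i
      using that unfolding y_def s'_def by simp
    have st_eq: "dill_start f \<delta> s' K = dill_start f \<delta> y K"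
      by (rule local_start[OF lr, of K]) (use ys' in \<open>auto simp: m_def N_def\<close>)
    have cy: "c (j + dill_start f \<delta> y m) = c j" for j
      by (rule c_per) (simp add: y_def)
    have cy2: "c (j + dill_start f \<delta> (sh y K) N) = c j" for j
      by (rule c_per) (simp add: y_def sh_def m_def)
    have ysum: "dill_start f \<delta> y m = dill_start f \<delta> y K + dill_start f \<delta> (sh y K) N"
      unfolding m_def by (rule start_add)
    have cK: "c (j + dill_start f \<delta> s' K) = c j" for j
    proof -
      have "c (j + dill_start f \<delta> s' K) = c ((j + dill_start f \<delta> y K) + dill_start f \<delta> (sh y K) N)"
        using cy2 st_eq by simp
      also have "\<dots> = c (j + dill_start f \<delta> y m)" using ysum by (simp add: add.assoc)
      also have "\<dots> = c j" by (rule cy)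
      finally show ?thesis .
    qed
    have Fs: "dill_map f \<delta> (sh s' K) j = c j" for j
    proof -
      have "dill_map f \<delta> (sh s' K) j = G (dill_start f \<delta> s' K + j)"
        using map_sh[OF lr, of s' K j] unfolding G_def by simp
      also have "\<dots> = c (j + dill_start f \<delta> s' K)" using Gall by (simp add: add.commute)
      also have "\<dots> = c j" by (rule cK)
      finally show ?thesis .
    qed
    have agx: "x i = sh s' K i" if "i < n + 1 + \<delta>" for i
    proof -
      have "i + K < m" using that unfolding m_def N_def by simp
      then show ?thesis unfolding sh_def s'_def by simp
    qed
    have "dill_map f \<delta> x n = dill_map f \<delta> (sh s' K) n"
      by (rule local_map[OF lr, of "n + 1"]) (use agx start_ge[OF lr, of "n + 1" x] in auto)
    then show ?thesis using Fs by simp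
  qed
  then show ?thesis by blast
qed

end


lemma hamming_le: "hamming u v \<le> length u"
  unfolding hamming_def using card_lt_le[of "length u" "\<lambda>i. u ! i \<noteq> v ! i"] by simp

context
  fixes f :: "'a::finite list \<Rightarrow> 'a list" and \<delta> :: nat
  assumes lr: "local_rule \<delta> f"
begin

lemma unif_len:
  assumes "uniform \<delta> f" "length u = \<delta>"
  shows "length (f u) = lower_norm \<delta> f"
proof -
  have "lower_norm \<delta> f \<le> length (f u)"
    unfolding lower_norm_def by (rule Min_le) (use fin_words assms(2) in auto)
  moreover have "length (f u) \<le> upper_norm \<delta> f" by (rule len_le_U[OF lr assms(2)])
  ultimately show ?thesis using assms(1) unfolding uniform_def by simp
qed

lemma ham_le_D:
  assumes "uniform \<delta> f" "length u = \<delta>" "length v = \<delta>"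
  shows "hamming (f u) (f v) \<le> D_max \<delta> f"
  unfolding D_max_def
proof (rule Max_ge)
  have "{hamming (f u) (f v) |u v. length u = \<delta> \<and> length v = \<delta> \<and> length (f u) = length (f v)} \<subseteq> {..upper_norm \<delta> f}"
    using hamming_le len_le_U[OF lr] by (auto intro: order.trans)
  then show "finite {hamming (f u) (f v) |u v. length u = \<delta> \<and> length v = \<delta> \<and> length (f u) = length (f v)}"
    using finite_subset by blast
  show "hamming (f u) (f v) \<in> {hamming (f u) (f v) |u v. length u = \<delta> \<and> length v = \<delta> \<and> length (f u) = length (f v)}"
    using assms unif_len by fastforce
qed

lemma cnt_F:
  assumes unif: "uniform \<delta> f"
  defines "L \<equiv> lower_norm \<delta> f"
  shows "card {n. n < l \<and> dill_map f \<delta> x n \<noteq> dill_map f \<delta> y n}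
     \<le> D_max \<delta> f * (\<delta> * card {j. j < l div L + 1 + \<delta> \<and> x j \<noteq> y j})"
proof -
  let ?K = "l div L + 1"
  let ?Dm = "D_max \<delta> f"
  have blen: "length (dill_block f \<delta> z k) = L" for z k
    unfolding L_def dill_block_def by (rule unif_len[OF unif]) (simp add: factor_def)
  have L: "0 < L" using block_pos[OF lr, of x 0] blen by simp
  have st: "dill_start f \<delta> z k = k * L" for z k unfolding dill_start_def blen by simp
  have mapk: "dill_map f \<delta> z (k * L + i) = dill_block f \<delta> z k ! i" if "i < L" for z k i
    using map_at[OF lr, of i z k] that blen st by simp
  define H where "H k = {i. i < L \<and> dill_block f \<delta> x k ! i \<noteq> dill_block f \<delta> y k ! i}" for k
  have FD: "card {k\<in>{..<?K}. factor x k (k + \<delta>) \<noteq> factor y k (k + \<delta>)} \<le> \<delta> * card {j. j < l div L + 1 + \<delta> \<and> x j \<noteq> y j}"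
  proof -
    let ?C = "card {j. j < l div L + 1 + \<delta> \<and> x j \<noteq> y j}"
    have "{k\<in>{..<?K}. factor x k (k + \<delta>) \<noteq> factor y k (k + \<delta>)} \<subseteq> (\<Union>i\<in>{..<\<delta>}. {k. k < ?K \<and> x (k + i) \<noteq> y (k + i)})"
    proof
      fix k assume k: "k \<in> {k\<in>{..<?K}. factor x k (k + \<delta>) \<noteq> factor y k (k + \<delta>)}"
      have "\<exists>i<\<delta>. x (k + i) \<noteq> y (k + i)"
      proof (rule ccontr)
        assume "\<not> (\<exists>i<\<delta>. x (k + i) \<noteq> y (k + i))"
        then have all: "\<And>i. i < \<delta> \<Longrightarrow> x (k + i) = y (k + i)" by blast
        have "factor x k (k + \<delta>) = factor y k (k + \<delta>)"
          unfolding factor_def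
        proof (rule map_cong[OF refl])
          fix j assume "j \<in> set [k..<k + \<delta>]"
          then have "j = k + (j - k)" "j - k < \<delta>" by auto
          then show "x j = y j" using all[of "j - k"] by metis
        qed
        then show False using k by simp
      qed
      then show "k \<in> (\<Union>i\<in>{..<\<delta>}. {k. k < ?K \<and> x (k + i) \<noteq> y (k + i)})" using k by auto
    qed
    then have "card {k\<in>{..<?K}. factor x k (k + \<delta>) \<noteq> factor y k (k + \<delta>)} \<le> card (\<Union>i\<in>{..<\<delta>}. {k. k < ?K \<and> x (k + i) \<noteq> y (k + i)})"
      by (intro card_mono) auto
    also have "\<dots> \<le> (\<Sum>i<\<delta>. card {k. k < ?K \<and> x (k + i) \<noteq> y (k + i)})" by (rule card_UN_le) simp
    also have "\<dots> \<le> (\<Sum>i<\<delta>. ?C)"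
    proof (intro sum_mono)
      fix i assume i: "i \<in> {..<\<delta>}"
      have "card {k. k < ?K \<and> x (k + i) \<noteq> y (k + i)} = card ((\<lambda>k. k + i) ` {k. k < ?K \<and> x (k + i) \<noteq> y (k + i)})"
        by (rule card_image[symmetric]) (simp add: inj_on_def)
      also have "\<dots> \<le> ?C" by (rule card_mono) (use i in auto)
      finally show "card {k. k < ?K \<and> x (k + i) \<noteq> y (k + i)} \<le> ?C" .
    qed
    also have "\<dots> = \<delta> * ?C" by simp
    finally show ?thesis .
  qed
  have "{n. n < l \<and> dill_map f \<delta> x n \<noteq> dill_map f \<delta> y n} \<subseteq> (\<Union>k\<in>{..<?K}. (\<lambda>i. k * L + i) ` H k)"
  proof
    fix n assume n: "n \<in> {n. n < l \<and> dill_map f \<delta> x n \<noteq> dill_map f \<delta> y n}"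
    have e: "n = (n div L) * L + n mod L" by simp
    have "n mod L < L" using L by simp
    moreover have "n div L < ?K" using n div_le_mono[of n l L] by simp
    moreover have "dill_block f \<delta> x (n div L) ! (n mod L) \<noteq> dill_block f \<delta> y (n div L) ! (n mod L)"
      using n mapk[OF \<open>n mod L < L\<close>, of x "n div L"] mapk[OF \<open>n mod L < L\<close>, of y "n div L"] e by simp
    ultimately show "n \<in> (\<Union>k\<in>{..<?K}. (\<lambda>i. k * L + i) ` H k)"
      unfolding H_def using e by blast
  qed
  then have "card {n. n < l \<and> dill_map f \<delta> x n \<noteq> dill_map f \<delta> y n} \<le> card (\<Union>k\<in>{..<?K}. (\<lambda>i. k * L + i) ` H k)"
    by (intro card_mono) (auto simp: H_def)
  also have "\<dots> \<le> (\<Sum>k<?K. card ((\<lambda>i. k * L + i) ` H k))" by (rule card_UN_le) simp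
  also have "\<dots> \<le> (\<Sum>k<?K. card (H k))" by (intro sum_mono card_image_le) (simp add: H_def)
  also have "\<dots> = (\<Sum>k<?K. hamming (dill_block f \<delta> x k) (dill_block f \<delta> y k))"
    unfolding H_def hamming_def blen ..
  also have "\<dots> \<le> (\<Sum>k<?K. if factor x k (k + \<delta>) \<noteq> factor y k (k + \<delta>) then ?Dm else 0)"
  proof (intro sum_mono)
    fix k
    show "hamming (dill_block f \<delta> x k) (dill_block f \<delta> y k) \<le> (if factor x k (k + \<delta>) \<noteq> factor y k (k + \<delta>) then ?Dm else 0)"
    proof (cases "factor x k (k + \<delta>) = factor y k (k + \<delta>)")
      case True then show ?thesis by (simp add: dill_block_def hamming_def)
    next
      case False then show ?thesis unfolding dill_block_def
        using ham_le_D[OF unif] by (simp add: factor_def)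
    qed
  qed
  also have "\<dots> = (\<Sum>k\<in>{k\<in>{..<?K}. factor x k (k + \<delta>) \<noteq> factor y k (k + \<delta>)}. ?Dm)"
    by (rule sum.inter_filter[symmetric]) simp
  also have "\<dots> = card {k\<in>{..<?K}. factor x k (k + \<delta>) \<noteq> factor y k (k + \<delta>)} * ?Dm" by simp
  also have "\<dots> \<le> \<delta> * card {j. j < l div L + 1 + \<delta> \<and> x j \<noteq> y j} * ?Dm"
    using FD by (intro mult_right_mono) auto
  finally show ?thesis by (simp add: mult.commute)
qed

end


lemma limsup_bound:
  fixes a b :: "nat \<Rightarrow> real" and C E :: real and L :: nat
  assumes ab: "\<And>l. 0 < l \<Longrightarrow> a l \<le> C * b (l div L) + E / real l"
    and C: "0 \<le> C" and L: "0 < L" and b0: "\<And>l. 0 \<le> b l" and b1: "\<And>l. b l \<le> 1"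
  shows "limsup (\<lambda>l. ereal (a l)) \<le> ereal C * limsup (\<lambda>l. ereal (b l))"
proof -
  let ?B = "limsup (\<lambda>l. ereal (b l))"
  have B0: "0 \<le> ?B"
  proof -
    have "0 \<le> liminf (\<lambda>l. ereal (b l))" by (intro Liminf_bounded) (simp add: b0)
    also have "\<dots> \<le> ?B" by (rule Liminf_le_Limsup) simp
    finally show ?thesis .
  qed
  have B1: "?B \<le> 1" by (intro Limsup_bounded) (simp add: b1)
  obtain \<beta> where beta: "?B = ereal \<beta>" using B0 B1 by (cases ?B) auto
  have beta0: "0 \<le> \<beta>" using B0 beta by simp
  show ?thesis
    unfolding beta times_ereal.simps
  proof (subst Limsup_le_iff, intro allI impI)
    fix y assume y: "ereal (C * \<beta>) < y"
    show "\<forall>\<^sub>F l in sequentially. ereal (a l) < y"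
    proof (cases y)
      case PInf then show ?thesis by simp
    next
      case MInf then show ?thesis using y by simp
    next
      case (real y')
      define \<epsilon> where "\<epsilon> = y' - C * \<beta>"
      have eps: "0 < \<epsilon>" using y real by (simp add: \<epsilon>_def)
      define \<epsilon>' where "\<epsilon>' = \<epsilon> / (2 * (C + 1))"
      have eps': "0 < \<epsilon>'" using eps C by (simp add: \<epsilon>'_def)
      have Ceps: "C * \<epsilon>' \<le> \<epsilon> / 2"
      proof -
        have "C * \<epsilon>' = \<epsilon> / 2 * (C / (C + 1))" using C by (simp add: \<epsilon>'_def field_simps)
        also have "\<dots> \<le> \<epsilon> / 2 * 1" using C eps by (intro mult_left_mono) auto
        finally show ?thesis by simp
      qed
      have "\<forall>\<^sub>F k in sequentially. ereal (b k) < ereal (\<beta> + \<epsilon>')"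
        by (rule Limsup_lessD) (use beta eps' in simp)
      then obtain K0 where K0: "\<And>k. K0 \<le> k \<Longrightarrow> b k < \<beta> + \<epsilon>'"
        by (auto simp: eventually_sequentially)
      have "\<forall>\<^sub>F l in sequentially. E / real l < \<epsilon> / 2"
        by (rule order_tendstoD(2)[OF lim_const_over_n]) (use eps in simp)
      then obtain N1 where N1: "\<And>l. N1 \<le> l \<Longrightarrow> E / real l < \<epsilon> / 2"
        by (auto simp: eventually_sequentially)
      show ?thesis
      proof (rule eventually_sequentiallyI[of "max (max N1 (K0 * L)) 1"])
        fix l assume l: "max (max N1 (K0 * L)) 1 \<le> l"
        have "K0 * L div L \<le> l div L" using l by (intro div_le_mono) simp
        then have k: "K0 \<le> l div L" using L by simp
        have "a l \<le> C * b (l div L) + E / real l" using l by (intro ab) simp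
        also have "C * b (l div L) \<le> C * (\<beta> + \<epsilon>')" using K0[OF k] C by (intro mult_left_mono) auto
        also have "E / real l < \<epsilon> / 2" using l by (intro N1) simp
        finally have "a l < C * \<beta> + C * \<epsilon>' + \<epsilon> / 2" by (simp add: algebra_simps)
        also have "\<dots> \<le> y'" using Ceps \<epsilon>_def by linarith
        finally show "ereal (a l) < y" using real by simp
      qed
    qed
  qed
qed


context
  fixes f :: "'a::finite list \<Rightarrow> 'a list" and \<delta> :: nat
  assumes lr: "local_rule \<delta> f"
begin

lemma unif_ratio:
  assumes unif: "uniform \<delta> f" and l: "0 < l"
  shows "ratio (dill_map f \<delta> x) (dill_map f \<delta> y) l
     \<le> real \<delta> * real (D_max \<delta> f) / real (lower_norm \<delta> f) * ratio x y (l div lower_norm \<delta> f)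
        + real (D_max \<delta> f) * real \<delta> * real (1 + \<delta>) / real l"
proof -
  define L where "L = lower_norm \<delta> f"
  define k where "k = l div L"
  define Dm where "Dm = D_max \<delta> f"
  define cF where "cF = card {n. n < l \<and> dill_map f \<delta> x n \<noteq> dill_map f \<delta> y n}"
  define cx where "cx = card {j. j < k \<and> x j \<noteq> y j}"
  have L: "0 < L"
  proof -
    have "length (dill_block f \<delta> x 0) = L"
      unfolding L_def dill_block_def by (rule unif_len[OF lr unif]) (simp add: factor_def)
    then show ?thesis using block_pos[OF lr, of x 0] by simp
  qed
  have c1: "cF \<le> Dm * (\<delta> * card {j. j < k + 1 + \<delta> \<and> x j \<noteq> y j})"
    unfolding cF_def Dm_def k_def L_def by (rule cnt_F[OF lr unif])
  have "{j. j < k + 1 + \<delta> \<and> x j \<noteq> y j} \<subseteq> {j. j < k \<and> x j \<noteq> y j} \<union> {k..<k + 1 + \<delta>}" by auto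
  then have "card {j. j < k + 1 + \<delta> \<and> x j \<noteq> y j} \<le> card ({j. j < k \<and> x j \<noteq> y j} \<union> {k..<k + 1 + \<delta>})"
    by (intro card_mono) auto
  also have "\<dots> \<le> cx + (1 + \<delta>)" unfolding cx_def using card_Un_le[of "{j. j < k \<and> x j \<noteq> y j}" "{k..<k + 1 + \<delta>}"] by simp
  finally have c2: "card {j. j < k + 1 + \<delta> \<and> x j \<noteq> y j} \<le> cx + (1 + \<delta>)" .
  have "Dm * (\<delta> * card {j. j < k + 1 + \<delta> \<and> x j \<noteq> y j}) \<le> Dm * (\<delta> * (cx + (1 + \<delta>)))"
    using c2 by (intro mult_le_mono2) simp
  with c1 have n: "cF \<le> Dm * (\<delta> * (cx + (1 + \<delta>)))" by (rule le_trans)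
  have c3: "real cF \<le> real Dm * real \<delta> * real cx + real Dm * real \<delta> * real (1 + \<delta>)"
  proof -
    have "real cF \<le> real (Dm * (\<delta> * (cx + (1 + \<delta>))))" using n by (simp only: of_nat_le_iff)
    then show ?thesis by (simp add: algebra_simps)
  qed
  have r1: "ratio (dill_map f \<delta> x) (dill_map f \<delta> y) l = real cF / real l" unfolding ratio_def cF_def ..
  also have "\<dots> \<le> (real Dm * real \<delta> * real cx + real Dm * real \<delta> * real (1 + \<delta>)) / real l"
    using c3 by (intro divide_right_mono) simp_all
  also have "\<dots> = real Dm * real \<delta> * real cx / real l + real Dm * real \<delta> * real (1 + \<delta>) / real l"
    by (simp add: add_divide_distrib)
  also have "real Dm * real \<delta> * real cx / real l \<le> real \<delta> * real Dm / real L * ratio x y k"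
  proof (cases "k = 0")
    case True then show ?thesis unfolding cx_def by (simp add: ratio_def)
  next
    case False
    have "k * L \<le> l" unfolding k_def by (metis div_mult_mod_eq le_add1)
    then have kl: "real (k * L) \<le> real l" by (simp only: of_nat_le_iff)
    have kpos: "0 < real (k * L)" using False L by simp
    have "real Dm * real \<delta> * real cx / real l \<le> real Dm * real \<delta> * real cx / real (k * L)"
      by (rule divide_left_mono[OF kl]) (use kpos l in auto)
    also have "\<dots> = real \<delta> * real Dm / real L * ratio x y k"
      unfolding ratio_def cx_def using False L by (simp add: field_simps)
    finally show ?thesis .
  qed
  finally show ?thesis unfolding L_def k_def Dm_def by simp
qed

lemma lip:
  assumes unif: "uniform \<delta> f"
  shows "besicovitch (dill_map f \<delta> x) (dill_map f \<delta> y)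
     \<le> ereal (real \<delta> * real (D_max \<delta> f) / real (lower_norm \<delta> f)) * besicovitch x y"
  unfolding bes_def'
proof (rule limsup_bound)
  show "\<And>l. 0 < l \<Longrightarrow> ratio (dill_map f \<delta> x) (dill_map f \<delta> y) l
     \<le> real \<delta> * real (D_max \<delta> f) / real (lower_norm \<delta> f) * ratio x y (l div lower_norm \<delta> f)
        + real (D_max \<delta> f) * real \<delta> * real (1 + \<delta>) / real l"
    by (rule unif_ratio[OF unif])
  show "0 < lower_norm \<delta> f"
  proof -
    have "length (dill_block f \<delta> x 0) = lower_norm \<delta> f"
      unfolding dill_block_def by (rule unif_len[OF lr unif]) (simp add: factor_def)
    then show ?thesis using block_pos[OF lr, of x 0] by simp
  qed
qed (simp_all add: ratio_nonneg ratio_le1)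

end

theorem mainTheorem3:
  fixes f :: "'a::finite list \<Rightarrow> 'a list" and \<delta> :: nat
  assumes "local_rule \<delta> f"
  shows "((\<forall>x y. besicovitch x y = 0 \<longrightarrow>
             besicovitch (dill_map f \<delta> x) (dill_map f \<delta> y) = 0)
          \<longleftrightarrow>
          (\<forall>x y. besicovitch (dill_map f \<delta> x) (dill_map f \<delta> y)
             \<le> ereal (real \<delta> * real (D_max \<delta> f) / real (lower_norm \<delta> f)) * besicovitch x y))
      \<and> ((\<forall>x y. besicovitch x y = 0 \<longrightarrow>
             besicovitch (dill_map f \<delta> x) (dill_map f \<delta> y) = 0)
          \<longleftrightarrow>
          ((\<exists>c. \<forall>x. dill_map f \<delta> x = c) \<or> uniform \<delta> f))"
proof -
  let ?P1 = "\<forall>x y. besicovitch x y = 0 \<longrightarrow> besicovitch (dill_map f \<delta> x) (dill_map f \<delta> y) = 0"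
  let ?C = "real \<delta> * real (D_max \<delta> f) / real (lower_norm \<delta> f)"
  let ?P2 = "\<forall>x y. besicovitch (dill_map f \<delta> x) (dill_map f \<delta> y) \<le> ereal ?C * besicovitch x y"
  let ?P3 = "(\<exists>c. \<forall>x. dill_map f \<delta> x = c) \<or> uniform \<delta> f"
  have C0: "0 \<le> ?C" by simp
  have i13: "?P1 \<Longrightarrow> ?P3" using const_case[OF assms] by blast
  have i32: "?P3 \<Longrightarrow> ?P2"
  proof -
    assume P3: ?P3
    show ?P2
    proof (intro allI)
      fix x y
      show "besicovitch (dill_map f \<delta> x) (dill_map f \<delta> y) \<le> ereal ?C * besicovitch x y"
      proof (cases "uniform \<delta> f")
        case True then show ?thesis by (rule lip[OF assms])
      next
        case False
        then obtain c where c: "\<And>x. dill_map f \<delta> x = c" using P3 by blast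
        have "ratio c c = (\<lambda>_. 0)" by (simp add: ratio_def fun_eq_iff)
        then have "besicovitch c c = 0" by (simp add: bes_zero_iff)
        moreover have "0 \<le> ereal ?C * besicovitch x y" using C0 bes_nonneg by (intro ereal_0_le_mult) simp_all
        ultimately show ?thesis using c by simp
      qed
    qed
  qed
  have i21: "?P2 \<Longrightarrow> ?P1"
  proof (intro allI impI)
    fix x y :: "nat \<Rightarrow> 'a" assume P2: ?P2 and z: "besicovitch x y = 0"
    have "besicovitch (dill_map f \<delta> x) (dill_map f \<delta> y) \<le> 0" using spec[OF spec[OF P2, of x], of y] z by simp
    then show "besicovitch (dill_map f \<delta> x) (dill_map f \<delta> y) = 0" using bes_nonneg by (metis order.antisym)
  qed
  have "?P1 \<longleftrightarrow> ?P2" using i13 i32 i21 by blast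
  moreover have "?P1 \<longleftrightarrow> ?P3" using i13 i32 i21 by blast
  ultimately show ?thesis by blast
qed


end
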